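(* Let $(\Omega,\mathcal F,\mathbb P)$ and $u:\Omega\times\mathbb R\to\mathbb R$ satisfy: (i) for every $\omega$, $u(\omega,\cdot)$ is right continuous with left limits, nondecreasing, and $u(\omega,0)=0$; (ii) $u(\cdot,x)\in\mathcal L^1(\Omega,\mathcal F,\mathbb P)$ for every $x$; (iii) $T_u(f):=\int_\Omega u(\omega,f(\omega))\,\mathbb P(d\omega)$ is continuous from below on $\mathcal L^\infty(\Omega,\mathcal F)$ (i.e. $T_u(f_n)\to T_u(f)$ whenever $f_n(\omega)\uparrow f(\omega)$ for every $\omega$, all bounded measurable). Then there exists $\widehat u:\Omega\times\mathbb R\to\mathbb R$ with $\widehat u(\omega,\cdot)$ nondecreasing and continuous for every $\omega$, such that $E:=\{\omega: u(\omega,x)=\widehat u(\omega,x)\ \forall x\in\mathbb R\}\in\mathcal F$, $\mathbb P(E)=1$, and $T_u(f)=T_{\widehat u}(f)$ for every $f\in\mathcal L^\infty(\Omega,\mathcal F)$. Moreover, if $u(\omega,\cdot)$ is strictly increasing for every $\omega$, then $\widehat u(\omega,\cdot)$ can be taken strictly increasing for every $\omega$.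
   Context: $\mathcal L^\infty(\Omega,\mathcal F)$: bounded $\mathcal F$-measurable real functions; $T_{\widehat u}$ is defined analogously to $T_u$. *)

theory Defs
  imports "HOL-Probability.Probability"
begin

definition Linf :: "'a measure \<Rightarrow> ('a \<Rightarrow> real) set" where
  "Linf M = {f. f \<in> borel_measurable M \<and> (\<exists>c. \<forall>\<omega>\<in>space M. \<bar>f \<omega>\<bar> \<le> c)}"

definition T_fun :: "'a measure \<Rightarrow> ('a \<Rightarrow> real \<Rightarrow> real) \<Rightarrow> ('a \<Rightarrow> real) \<Rightarrow> real" where
  "T_fun M u f = (\<integral>\<omega>. u \<omega> (f \<omega>) \<partial>M)"

definition cont_from_below :: "'a measure \<Rightarrow> ('a \<Rightarrow> real \<Rightarrow> real) \<Rightarrow> bool" where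
  "cont_from_below M u \<longleftrightarrow>
     (\<forall>F f. (\<forall>n. F n \<in> Linf M) \<and> f \<in> Linf M \<and>
        (\<forall>\<omega>\<in>space M. incseq (\<lambda>n. F n \<omega>) \<and> (\<lambda>n. F n \<omega>) \<longlonglongrightarrow> f \<omega>)
        \<longrightarrow> (\<lambda>n. T_fun M u (F n)) \<longlonglongrightarrow> T_fun M u f)"

end

theory Submission
  imports Defs
begin


definition finv :: "('a \<Rightarrow> real \<Rightarrow> real) \<Rightarrow> real \<Rightarrow> nat \<Rightarrow> 'a \<Rightarrow> real" where
  "finv u y m \<omega> = Inf ({x. - real m \<le> x \<and> x \<le> real m \<and> y \<le> u \<omega> x} \<union> {real m})"

lemma finv_bdd: "bdd_below ({x. - real m \<le> x \<and> x \<le> real m \<and> y \<le> u \<omega> x} \<union> {real m})"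
  by (rule bdd_belowI[of _ "- real m"]) auto

lemma finv_bounds: "- real m \<le> finv u y m \<omega> \<and> finv u y m \<omega> \<le> real m"
  unfolding finv_def
  by (intro conjI cInf_greatest cInf_lower finv_bdd) auto

lemma finv_val:
  assumes mono: "mono (u \<omega>)" and rc: "\<And>x. continuous (at_right x) (u \<omega>)"
    and lt: "finv u y m \<omega> < real m"
  shows "y \<le> u \<omega> (finv u y m \<omega>)"
proof -
  let ?S = "{x. - real m \<le> x \<and> x \<le> real m \<and> y \<le> u \<omega> x} \<union> {real m}"
  let ?f = "finv u y m \<omega>"
  have key: "y \<le> u \<omega> z" if "?f < z" for z
  proof -
    have lt2: "Inf ?S < min z (real m)" using that lt unfolding finv_def by simp
    have ne: "?S \<noteq> {}" by auto
    have ex: "\<exists>s\<in>?S. s < min z (real m)"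
      by (rule iffD1[OF cInf_less_iff[OF ne finv_bdd[where m=m and y=y and u=u and \<omega>=\<omega>]] lt2])
    from ex obtain s where "s \<in> ?S" "s < min z (real m)" by (elim bexE)
    then have "y \<le> u \<omega> s" "s \<le> z" by auto
    then show ?thesis using mono by (meson monoD order_trans)
  qed
  have "(u \<omega> \<longlongrightarrow> u \<omega> ?f) (at_right ?f)" using rc[of ?f] by (simp add: continuous_within)
  moreover have "eventually (\<lambda>z. y \<le> u \<omega> z) (at_right ?f)"
    unfolding eventually_at_filter by (intro always_eventually) (auto intro: key)
  ultimately show ?thesis by (rule tendsto_lowerbound) simp
qed

lemma finv_le_iff:
  assumes mono: "mono (u \<omega>)" and rc: "\<And>x. continuous (at_right x) (u \<omega>)"
    and t: "- real m \<le> t" "t < real m"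
  shows "finv u y m \<omega> \<le> t \<longleftrightarrow> y \<le> u \<omega> t"
proof
  assume "finv u y m \<omega> \<le> t"
  with t have "finv u y m \<omega> < real m" by simp
  from finv_val[OF mono rc this] \<open>finv u y m \<omega> \<le> t\<close> mono show "y \<le> u \<omega> t"
    by (meson monoD order_trans)
next
  assume "y \<le> u \<omega> t"
  then show "finv u y m \<omega> \<le> t" unfolding finv_def
    using t by (intro cInf_lower finv_bdd) auto
qed

lemma finv_eq:
  assumes "- real m \<le> x" "x \<le> real m" "y \<le> u \<omega> x" "\<And>z. z < x \<Longrightarrow> u \<omega> z < y"
  shows "finv u y m \<omega> = x"
  unfolding finv_def
proof (rule cInf_eq_minimum)
  show "x \<in> {x. - real m \<le> x \<and> x \<le> real m \<and> y \<le> u \<omega> x} \<union> {real m}" using assms by auto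
next
  fix s assume "s \<in> {x. - real m \<le> x \<and> x \<le> real m \<and> y \<le> u \<omega> x} \<union> {real m}"
  note s = this
  show "x \<le> s"
  proof (rule ccontr)
    assume "\<not> x \<le> s"
    then have "s < x" by simp
    with assms(4) have "u \<omega> s < y" by blast
    moreover from s \<open>s < x\<close> assms(2) have "y \<le> u \<omega> s" by auto
    ultimately show False by simp
  qed
qed

lemma finv_meas:
  assumes meas: "\<And>x. (\<lambda>\<omega>. u \<omega> x) \<in> borel_measurable M"
    and mono: "\<And>\<omega>. \<omega> \<in> space M \<Longrightarrow> mono (u \<omega>)"
    and rc: "\<And>\<omega> x. \<omega> \<in> space M \<Longrightarrow> continuous (at_right x) (u \<omega>)"
  shows "finv u y m \<in> borel_measurable M"
  unfolding borel_measurable_iff_le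
proof
  fix t
  consider "t < - real m" | "- real m \<le> t" "t < real m" | "real m \<le> t" by linarith
  then show "{w \<in> space M. finv u y m w \<le> t} \<in> sets M"
  proof cases
    case 1
    have "t < finv u y m w" for w using 1 conjunct1[OF finv_bounds[of m u y w]] by linarith
    then have "{w \<in> space M. finv u y m w \<le> t} = {}" by (auto simp: not_le)
    then show ?thesis by (metis sets.empty_sets)
  next
    case 2
    have "finv u y m w \<le> t \<longleftrightarrow> y \<le> u w t" if "w \<in> space M" for w
      using finv_le_iff[where u=u and \<omega>=w and m=m and t=t and y=y, OF mono[OF that] rc[OF that] 2] .
    then have "{w \<in> space M. finv u y m w \<le> t} = {w \<in> space M. y \<le> u w t}"
      by blast
    also have "\<dots> \<in> sets M" using meas[of t] by measurable
    finally show ?thesis .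
  next
    case 3
    have "finv u y m w \<le> t" for w using 3 conjunct2[OF finv_bounds[of m u y w]] by linarith
    then have "{w \<in> space M. finv u y m w \<le> t} = space M" by auto
    then show ?thesis by simp
  qed
qed



lemma comp_meas:
  fixes u :: "'a \<Rightarrow> real \<Rightarrow> real"
  assumes meas: "\<And>x. (\<lambda>\<omega>. u \<omega> x) \<in> borel_measurable M"
    and mono: "\<And>\<omega>. \<omega> \<in> space M \<Longrightarrow> mono (u \<omega>)"
    and rc: "\<And>\<omega> x. \<omega> \<in> space M \<Longrightarrow> continuous (at_right x) (u \<omega>)"
    and g: "g \<in> borel_measurable M"
  shows "(\<lambda>\<omega>. u \<omega> (g \<omega>)) \<in> borel_measurable M"
proof (rule borel_measurable_LIMSEQ_real[where u="\<lambda>n \<omega>. u \<omega> (real_of_int \<lceil>g \<omega> * 2 ^ n\<rceil> / 2 ^ n)"])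
  let ?h = "\<lambda>n \<omega>. u \<omega> (real_of_int \<lceil>g \<omega> * 2 ^ n\<rceil> / 2 ^ n)"
  show "?h n \<in> borel_measurable M" for n
  proof -
    have m0: "(\<lambda>\<omega>. g \<omega> * 2 ^ n) \<in> borel_measurable M"
      by (rule borel_measurable_times[OF g borel_measurable_const])
    have m1: "(\<lambda>\<omega>. \<lceil>g \<omega> * 2 ^ n\<rceil>) \<in> M \<rightarrow>\<^sub>M count_space UNIV"
      by (rule measurable_compose[OF m0 measurable_real_ceiling])
    have "(\<lambda>\<omega>. (\<lambda>k::int. \<lambda>\<omega>. u \<omega> (real_of_int k / 2 ^ n)) (\<lceil>g \<omega> * 2 ^ n\<rceil>) \<omega>) \<in> borel_measurable M"
      by (rule measurable_compose_countable[where f="\<lambda>k \<omega>. u \<omega> (real_of_int k / 2 ^ n)" and g="\<lambda>\<omega>. \<lceil>g \<omega> * 2 ^ n\<rceil>", OF _ m1]) (rule meas)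
    then show ?thesis .
  qed
  fix \<omega> assume \<omega>: "\<omega> \<in> space M"
  let ?x = "g \<omega>"
  have lo: "?x \<le> real_of_int \<lceil>?x * 2 ^ n\<rceil> / 2 ^ n" for n
  proof -
    have "?x * 2 ^ n \<le> real_of_int \<lceil>?x * 2 ^ n\<rceil>" by (rule le_of_int_ceiling)
    then show ?thesis by (simp add: pos_le_divide_eq)
  qed
  have hi: "real_of_int \<lceil>?x * 2 ^ n\<rceil> / 2 ^ n \<le> ?x + 1 / 2 ^ n" for n
  proof -
    have "real_of_int \<lceil>?x * 2 ^ n\<rceil> \<le> ?x * 2 ^ n + 1" by linarith
    then show ?thesis by (simp add: pos_divide_le_eq distrib_right)
  qed
  have "(\<lambda>n. ?x + 1 / 2 ^ n) \<longlonglongrightarrow> ?x + 0"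
    by (intro tendsto_add tendsto_const LIMSEQ_divide_realpow_zero) auto
  then have "filterlim (\<lambda>n. ?x + 1 / 2 ^ n) (at_right ?x) sequentially"
    by (intro filterlim_at_withinI) auto
  moreover have "(u \<omega> \<longlongrightarrow> u \<omega> ?x) (at_right ?x)" using rc[OF \<omega>] by (simp add: continuous_within)
  ultimately have up: "(\<lambda>n. u \<omega> (?x + 1 / 2 ^ n)) \<longlonglongrightarrow> u \<omega> ?x"
    by (rule filterlim_compose[rotated])
  show "(\<lambda>n. ?h n \<omega>) \<longlonglongrightarrow> u \<omega> ?x"
  proof (rule tendsto_sandwich[OF _ _ tendsto_const up])
    show "\<forall>\<^sub>F n in sequentially. u \<omega> ?x \<le> ?h n \<omega>"
      by (intro always_eventually allI monoD[OF mono[OF \<omega>]] lo)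
    show "\<forall>\<^sub>F n in sequentially. ?h n \<omega> \<le> u \<omega> (?x + 1 / 2 ^ n)"
      by (intro always_eventually allI monoD[OF mono[OF \<omega>]] hi)
  qed
qed


locale setting =
  fixes M :: "'a measure" and u :: "'a \<Rightarrow> real \<Rightarrow> real"
  assumes ps: "prob_space M"
    and mono: "\<And>\<omega>. \<omega> \<in> space M \<Longrightarrow> mono (u \<omega>)"
    and rc: "\<And>\<omega> x. \<omega> \<in> space M \<Longrightarrow> continuous (at_right x) (u \<omega>)"
    and ll: "\<And>\<omega> x. \<omega> \<in> space M \<Longrightarrow> \<exists>l. (u \<omega> \<longlongrightarrow> l) (at_left x)"
    and integ: "\<And>x. integrable M (\<lambda>\<omega>. u \<omega> x)"
    and cfb: "cont_from_below M u"
begin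

lemma meas: "(\<lambda>\<omega>. u \<omega> x) \<in> borel_measurable M"
  using integ[of x] by (rule borel_measurable_integrable)

lemma cm: "g \<in> borel_measurable M \<Longrightarrow> (\<lambda>\<omega>. u \<omega> (g \<omega>)) \<in> borel_measurable M"
  by (rule comp_meas[OF meas mono rc])

lemma int_comp:
  assumes g: "g \<in> borel_measurable M" and b: "\<And>\<omega>. \<omega> \<in> space M \<Longrightarrow> a \<le> g \<omega> \<and> g \<omega> \<le> b"
  shows "integrable M (\<lambda>\<omega>. u \<omega> (g \<omega>))"
proof (rule Bochner_Integration.integrable_bound)
  show "integrable M (\<lambda>\<omega>. \<bar>u \<omega> a\<bar> + \<bar>u \<omega> b\<bar>)"
    by (intro Bochner_Integration.integrable_add integrable_abs integ)
  show "(\<lambda>\<omega>. u \<omega> (g \<omega>)) \<in> borel_measurable M" by (rule cm[OF g])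
  show "AE \<omega> in M. norm (u \<omega> (g \<omega>)) \<le> norm (\<bar>u \<omega> a\<bar> + \<bar>u \<omega> b\<bar>)"
  proof (rule AE_I2)
    fix \<omega> assume \<omega>: "\<omega> \<in> space M"
    have "u \<omega> a \<le> u \<omega> (g \<omega>)" "u \<omega> (g \<omega>) \<le> u \<omega> b"
      using b[OF \<omega>] monoD[OF mono[OF \<omega>]] by auto
    then show "norm (u \<omega> (g \<omega>)) \<le> norm (\<bar>u \<omega> a\<bar> + \<bar>u \<omega> b\<bar>)" by simp
  qed
qed

definition A :: "rat \<Rightarrow> nat \<Rightarrow> nat \<Rightarrow> 'a set" where
  "A q m k = {\<omega>\<in>space M. \<forall>n. inverse (real (Suc k)) \<le>
      u \<omega> (finv u (of_rat q) m \<omega>) - u \<omega> (finv u (of_rat q) m \<omega> - inverse (real (Suc n)))}"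

lemma A_null: "A q m k \<in> null_sets M"
proof -
  interpret P: prob_space M by (rule ps)
  define f where "f = finv u (of_rat q) m"
  define F where "F n \<omega> = f \<omega> - inverse (real (Suc n))" for n \<omega>
  define c where "c = inverse (real (Suc k))"
  have c: "0 < c" unfolding c_def by simp
  have fm: "f \<in> borel_measurable M" unfolding f_def by (rule finv_meas[OF meas mono rc])
  have fb: "- real m \<le> f \<omega> \<and> f \<omega> \<le> real m" for \<omega> unfolding f_def by (rule finv_bounds)
  have Fm: "F n \<in> borel_measurable M" for n unfolding F_def using fm by measurable
  have Fb: "- real m - 1 \<le> F n \<omega> \<and> F n \<omega> \<le> real m" for n \<omega>
  proof -
    have "inverse (real (Suc n)) \<le> 1" "0 \<le> inverse (real (Suc n))" by (auto simp: field_simps)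
    then show ?thesis using fb[of \<omega>] unfolding F_def by linarith
  qed
  have fab: "\<bar>f \<omega>\<bar> \<le> real m" for \<omega> using fb[of \<omega>] by (simp add: abs_le_iff)
  have fL: "f \<in> Linf M" unfolding Linf_def using fm fab by (auto intro!: exI[of _ "real m"])
  have Fab: "\<bar>F n \<omega>\<bar> \<le> real m + 1" for n \<omega> using Fb[of n \<omega>] by (simp add: abs_le_iff)
  have FL: "F n \<in> Linf M" for n unfolding Linf_def using Fm Fab
    by (auto intro!: exI[of _ "real m + 1"])
  have lim0: "(\<lambda>n. inverse (real (Suc n))) \<longlonglongrightarrow> 0" by (rule LIMSEQ_inverse_real_of_nat)
  have inc: "incseq (\<lambda>n. F n \<omega>)" for \<omega>
    unfolding F_def by (intro incseq_SucI) (simp add: field_simps)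
  have conv: "(\<lambda>n. F n \<omega>) \<longlonglongrightarrow> f \<omega>" for \<omega>
    unfolding F_def using tendsto_diff[OF tendsto_const lim0, of "f \<omega>"] by simp
  have Tlim: "(\<lambda>n. T_fun M u (F n)) \<longlonglongrightarrow> T_fun M u f"
    using cfb FL fL inc conv unfolding cont_from_below_def by blast
  have If: "integrable M (\<lambda>\<omega>. u \<omega> (f \<omega>))" by (rule int_comp[OF fm fb])
  have IF: "integrable M (\<lambda>\<omega>. u \<omega> (F n \<omega>))" for n by (rule int_comp[OF Fm Fb])
  have hm: "(\<lambda>\<omega>. u \<omega> (f \<omega>) - u \<omega> (F n \<omega>)) \<in> borel_measurable M" for n
    using cm[OF fm] cm[OF Fm] by measurable
  have Aeq: "A q m k = {\<omega>\<in>space M. \<forall>n. c \<le> u \<omega> (f \<omega>) - u \<omega> (F n \<omega>)}"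
    unfolding A_def f_def F_def c_def ..
  have Asets: "A q m k \<in> sets M"
    unfolding Aeq
  proof (rule sets.sets_Collect_countable_All)
    fix n show "{\<omega>\<in>space M. c \<le> u \<omega> (f \<omega>) - u \<omega> (F n \<omega>)} \<in> sets M"
      using hm[of n] by measurable
  qed
  have bound: "measure M (A q m k) * c \<le> T_fun M u f - T_fun M u (F n)" for n
  proof -
    have "measure M (A q m k) * c = (\<integral>\<omega>. indicator (A q m k) \<omega> * c \<partial>M)"
      using Asets sets.sets_into_space[OF Asets] by (simp add: Int_absorb2)
    also have "\<dots> \<le> (\<integral>\<omega>. u \<omega> (f \<omega>) - u \<omega> (F n \<omega>) \<partial>M)"
    proof (rule integral_mono)
      show "integrable M (\<lambda>\<omega>. indicator (A q m k) \<omega> * c)"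
        using Asets by (auto intro!: integrable_real_indicator simp: P.emeasure_eq_measure)
      show "integrable M (\<lambda>\<omega>. u \<omega> (f \<omega>) - u \<omega> (F n \<omega>))"
        using If IF by simp
      fix \<omega> assume \<omega>: "\<omega> \<in> space M"
      have "F n \<omega> \<le> f \<omega>" unfolding F_def by simp
      then have ge: "0 \<le> u \<omega> (f \<omega>) - u \<omega> (F n \<omega>)" using monoD[OF mono[OF \<omega>]] by simp
      show "indicator (A q m k) \<omega> * c \<le> u \<omega> (f \<omega>) - u \<omega> (F n \<omega>)"
      proof (cases "\<omega> \<in> A q m k")
        case True then show ?thesis unfolding Aeq by simp
      next
        case False then show ?thesis using ge by simp
      qed
    qed
    also have "\<dots> = T_fun M u f - T_fun M u (F n)"
      unfolding T_fun_def using If IF by simp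
    finally show ?thesis .
  qed
  have "(\<lambda>n. T_fun M u f - T_fun M u (F n)) \<longlonglongrightarrow> T_fun M u f - T_fun M u f"
    by (intro tendsto_diff tendsto_const Tlim)
  then have "measure M (A q m k) * c \<le> 0"
    using bound by (intro tendsto_lowerbound[of _ 0]) (auto intro: always_eventually)
  then have "measure M (A q m k) = 0" using c by (simp add: mult_le_0_iff measure_nonneg order.antisym)
  then show ?thesis using Asets by (simp add: P.emeasure_eq_measure null_sets_def)
qed

definition N :: "'a set" where
  "N = (\<Union>i::rat \<times> nat \<times> nat. A (fst i) (fst (snd i)) (snd (snd i)))"

lemma N_null: "N \<in> null_sets M"
  unfolding N_def by (intro null_sets_UN A_null)

lemma in_N_discont:
  assumes "\<omega> \<in> N" shows "\<not> continuous_on UNIV (u \<omega>)"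
proof
  assume cont: "continuous_on UNIV (u \<omega>)"
  from assms obtain q m k where w: "\<omega> \<in> A q m k" unfolding N_def by auto
  define x where "x = finv u (of_rat q) m \<omega>"
  define c where "c = inverse (real (Suc k))"
  have c: "0 < c" unfolding c_def by simp
  have ge: "c \<le> u \<omega> x - u \<omega> (x - inverse (real (Suc n)))" for n
    using w unfolding A_def x_def c_def by blast
  have ic: "isCont (u \<omega>) x" using cont by (simp add: continuous_on_eq_continuous_at)
  have "(\<lambda>n. x - inverse (real (Suc n))) \<longlonglongrightarrow> x - 0"
    by (intro tendsto_diff tendsto_const LIMSEQ_inverse_real_of_nat)
  then have "(\<lambda>n. u \<omega> (x - inverse (real (Suc n)))) \<longlonglongrightarrow> u \<omega> x"
    using isCont_tendsto_compose[OF ic] by simp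
  then have "(\<lambda>n. u \<omega> x - u \<omega> (x - inverse (real (Suc n)))) \<longlonglongrightarrow> u \<omega> x - u \<omega> x"
    by (intro tendsto_diff tendsto_const)
  then have "c \<le> u \<omega> x - u \<omega> x"
    using ge by (intro tendsto_lowerbound) (auto intro: always_eventually)
  with c show False by simp
qed

lemma discont_in_N:
  assumes w: "\<omega> \<in> space M" and nc: "\<not> continuous_on UNIV (u \<omega>)"
  shows "\<omega> \<in> N"
proof -
  from nc obtain x where nx: "\<not> isCont (u \<omega>) x" by (auto simp: continuous_on_eq_continuous_at)
  have mo: "mono (u \<omega>)" using mono[OF w] .
  from ll[OF w, of x] obtain l where l: "(u \<omega> \<longlongrightarrow> l) (at_left x)" by blast
  have "\<not> continuous (at_left x) (u \<omega>)" using nx rc[OF w, of x] continuous_at_split by blast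
  then have lne: "l \<noteq> u \<omega> x" using l by (auto simp: continuous_within)
  have "l \<le> u \<omega> x"
  proof (rule tendsto_upperbound[OF l])
    show "\<forall>\<^sub>F z in at_left x. u \<omega> z \<le> u \<omega> x"
      using eventually_at_left_real[of "x - 1" x]
      by (rule eventually_mono) (auto intro: monoD[OF mo])
  qed simp
  with lne have llt: "l < u \<omega> x" by simp
  have below: "u \<omega> z \<le> l" if "z < x" for z
  proof (rule tendsto_lowerbound[OF l])
    show "\<forall>\<^sub>F w in at_left x. u \<omega> z \<le> u \<omega> w"
      using eventually_at_left_real[OF that]
      by (rule eventually_mono) (auto intro: monoD[OF mo])
  qed simp
  obtain r where r: "r \<in> \<rat>" "l < r" "r < u \<omega> x" using Rats_dense_in_real[OF llt] by blast
  from r(1) obtain q where q: "r = of_rat q" by (cases rule: Rats_cases)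
  obtain m :: nat where m: "\<bar>x\<bar> < real m" using reals_Archimedean2 by blast
  obtain n0 :: nat where n0: "n0 > 0" "inverse (real n0) < u \<omega> x - l"
    using ex_inverse_of_nat_less[of "u \<omega> x - l"] llt by auto
  define k where "k = n0 - 1"
  have kk: "real (Suc k) = real n0" unfolding k_def using n0(1) by simp
  have fx: "finv u (of_rat q) m \<omega> = x"
  proof (rule finv_eq)
    show "- real m \<le> x" "x \<le> real m" using m by auto
    show "of_rat q \<le> u \<omega> x" using r q by simp
    show "u \<omega> z < of_rat q" if "z < x" for z using below[OF that] r q by simp
  qed
  have le: "inverse (real (Suc k)) \<le> u \<omega> x - u \<omega> (x - inverse (real (Suc n)))" for n
  proof -
    have "x - inverse (real (Suc n)) < x" by simp
    then have "u \<omega> (x - inverse (real (Suc n))) \<le> l" by (rule below)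
    then show ?thesis using n0(2) kk by simp
  qed
  have "\<omega> \<in> A q m k"
    unfolding A_def using w le fx by simp
  then show ?thesis unfolding N_def by (intro UN_I[of "(q, m, k)"]) auto
qed

end


theorem mainTheorem15:
  fixes M :: "'a measure" and u :: "'a \<Rightarrow> real \<Rightarrow> real"
  assumes "prob_space M"
    and "\<forall>\<omega>\<in>space M. (\<forall>x. continuous (at_right x) (u \<omega>) \<and> (\<exists>l. (u \<omega> \<longlongrightarrow> l) (at_left x)))
                      \<and> mono (u \<omega>) \<and> u \<omega> 0 = 0"
    and "\<forall>x. integrable M (\<lambda>\<omega>. u \<omega> x)"
    and "cont_from_below M u"
  shows "\<exists>uh :: 'a \<Rightarrow> real \<Rightarrow> real.
           (\<forall>\<omega>\<in>space M. mono (uh \<omega>) \<and> continuous_on UNIV (uh \<omega>)) \<and>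
           {\<omega>\<in>space M. \<forall>x. u \<omega> x = uh \<omega> x} \<in> sets M \<and>
           measure M {\<omega>\<in>space M. \<forall>x. u \<omega> x = uh \<omega> x} = 1 \<and>
           (\<forall>f\<in>Linf M. T_fun M u f = T_fun M uh f) \<and>
           ((\<forall>\<omega>\<in>space M. strict_mono (u \<omega>)) \<longrightarrow> (\<forall>\<omega>\<in>space M. strict_mono (uh \<omega>)))"
proof -
  have st: "setting M u"
  proof (unfold setting_def, intro conjI allI impI)
    show "prob_space M" by (rule assms(1))
    show "cont_from_below M u" by (rule assms(4))
    show "integrable M (\<lambda>\<omega>. u \<omega> x)" for x using assms(3) by blast
    show "mono (u \<omega>)" if "\<omega> \<in> space M" for \<omega> using assms(2) that by blast
    show "continuous (at_right x) (u \<omega>)" if "\<omega> \<in> space M" for \<omega> x using assms(2) that by blast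
    show "\<exists>l. (u \<omega> \<longlongrightarrow> l) (at_left x)" if "\<omega> \<in> space M" for \<omega> x using assms(2) that by blast
  qed
  interpret S: setting M u by (rule st)
  interpret P: prob_space M by (rule assms(1))
  define uh where "uh = (\<lambda>\<omega>. if \<omega> \<in> S.N then (\<lambda>x::real. x) else u \<omega>)"
  have Nsets: "S.N \<in> sets M" using S.N_null by auto
  have Nsub: "S.N \<subseteq> space M" using sets.sets_into_space[OF Nsets] .
  have E: "{\<omega>\<in>space M. \<forall>x. u \<omega> x = uh \<omega> x} = space M - S.N"
  proof (intro set_eqI iffI)
    fix \<omega> assume "\<omega> \<in> {\<omega>\<in>space M. \<forall>x. u \<omega> x = uh \<omega> x}"
    then have w: "\<omega> \<in> space M" and eq: "\<And>x. u \<omega> x = uh \<omega> x" by auto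
    show "\<omega> \<in> space M - S.N"
    proof (rule DiffI[OF w], rule notI)
      assume n: "\<omega> \<in> S.N"
      then have "u \<omega> = (\<lambda>x. x)" using eq by (auto simp: uh_def)
      then have "continuous_on UNIV (u \<omega>)" by (simp add: continuous_on_id)
      with S.in_N_discont[OF n] show False by simp
    qed
  next
    fix \<omega> assume "\<omega> \<in> space M - S.N"
    then show "\<omega> \<in> {\<omega>\<in>space M. \<forall>x. u \<omega> x = uh \<omega> x}" by (simp add: uh_def)
  qed
  have m0: "measure M S.N = 0" using S.N_null by (simp add: measure_def null_setsD1)
  show ?thesis
  proof (intro exI[of _ uh] conjI ballI impI)
    fix \<omega> assume w: "\<omega> \<in> space M"
    show "mono (uh \<omega>)" using S.mono[OF w] by (auto simp: uh_def mono_def)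
    show "continuous_on UNIV (uh \<omega>)"
      using S.discont_in_N[OF w] by (auto simp: uh_def continuous_on_id)
  next
    show "{\<omega>\<in>space M. \<forall>x. u \<omega> x = uh \<omega> x} \<in> sets M" unfolding E using Nsets by auto
  next
    show "measure M {\<omega>\<in>space M. \<forall>x. u \<omega> x = uh \<omega> x} = 1"
      unfolding E using P.prob_compl[OF Nsets] m0 by simp
  next
    fix f assume f: "f \<in> Linf M"
    then have fm: "f \<in> borel_measurable M" unfolding Linf_def by simp
    have um: "(\<lambda>\<omega>. u \<omega> (f \<omega>)) \<in> borel_measurable M" by (rule S.cm[OF fm])
    have heq: "(\<lambda>\<omega>. uh \<omega> (f \<omega>)) = (\<lambda>\<omega>. if \<omega> \<in> S.N then f \<omega> else u \<omega> (f \<omega>))"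
      by (auto simp: uh_def)
    have hm: "(\<lambda>\<omega>. uh \<omega> (f \<omega>)) \<in> borel_measurable M"
      unfolding heq by (rule measurable_If_set[OF fm um]) (use Nsets in auto)
    have "AE \<omega> in M. u \<omega> (f \<omega>) = uh \<omega> (f \<omega>)"
      using AE_not_in[OF S.N_null] by (rule AE_mp) (auto simp: uh_def)
    then show "T_fun M u f = T_fun M uh f"
      unfolding T_fun_def by (rule integral_cong_AE[OF um hm])
  next
    fix \<omega> assume sm: "\<forall>\<omega>\<in>space M. strict_mono (u \<omega>)" and w: "\<omega> \<in> space M"
    show "strict_mono (uh \<omega>)" using sm w by (auto simp: uh_def strict_mono_def)
  qed
qed

end
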